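(* Let $K=[k_1,\dots,k_m]\subseteq\{1,\dots,n\}$ be an interval of $m$ consecutive integers $k_1<\dots<k_m$, and let $\delta_K=\prod_{1\le i<j\le m}\big(1-\frac{x_{k_i}}{x_{k_j}}\big)\prod_{1\le r<s\le m}\big(1-\frac{1}{x_{k_r}x_{k_s}}\big)$. Then for every $\alpha\in\mathbb Z^m$, $$\mathrm H_G\big(\delta_K\,x_{k_1}^{\alpha_1}\cdots x_{k_m}^{\alpha_m}\big)=u^G_\alpha .$$
   Context: $G\in\{Sp_{2n},SO_{2n},SO_{2n+1}\}$; $h^G_k$ ($k\in\mathbb Z$) are elements of the ring $\Lambda$ of symmetric functions with $h^G_k=s^G_{(k)}$ (Koike–Terada universal character) for $k\ge0$ and $h^G_k=0$ for $k<0$. $\mathrm H_G$ is the $\mathbb Z$-linear map from the Laurent polynomial ring $\mathbb Z[x_1^{\pm1},\dots,x_n^{\pm1}]$ to $\Lambda$ sending $x^\beta=x_1^{\beta_1}\cdots x_n^{\beta_n}$ to $h^G_{\beta_1}h^G_{\beta_2}\cdots h^G_{\beta_n}$ (it is not a ring homomorphism). For $\alpha\in\mathbb Z^m$, $u^G_\alpha$ is the $m\times m$ determinant whose $(i,1)$ entry is $h^G_{\alpha_i-i+1}$ and whose $(i,j)$ entry for $2\le j\le m$ is $h^G_{\alpha_i-i+j}+h^G_{\alpha_i-i-j+2}$. *)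

theory Defs
  imports "HOL-Library.Poly_Mapping" "HOL-Combinatorics.Permutations"
begin

(* Lambda = Z[h_1,h_2,...]: integer polynomials in the generators h_1,h_2,... *)
type_synonym sym_fun = "(nat \<Rightarrow>\<^sub>0 nat) \<Rightarrow>\<^sub>0 int"

(* Laurent polynomials: monomials x^beta with beta :: nat \<Rightarrow>\<^sub>0 int (variable j = x_j) *)
type_synonym laurent = "(nat \<Rightarrow>\<^sub>0 int) \<Rightarrow>\<^sub>0 int"

definition hsym :: "int \<Rightarrow> sym_fun" where
  "hsym k = (if k < 0 then 0 else if k = 0 then 1
             else Poly_Mapping.single (Poly_Mapping.single (nat k) 1) 1)"

datatype group_type = Sp_even | SO_even | SO_odd

(* one-row Koike--Terada universal characters: sp_(k) = h_k, o_(k) = h_k - h_(k-2) *)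
definition hG :: "group_type \<Rightarrow> int \<Rightarrow> sym_fun" where
  "hG G k = (if k < 0 then 0 else
      (case G of Sp_even \<Rightarrow> hsym k
               | SO_even \<Rightarrow> hsym k - hsym (k - 2)
               | SO_odd \<Rightarrow> hsym k - hsym (k - 2)))"

definition xpow :: "nat \<Rightarrow> int \<Rightarrow> laurent" where
  "xpow j e = Poly_Mapping.single (Poly_Mapping.single j e) 1"

definition H_G :: "group_type \<Rightarrow> nat \<Rightarrow> laurent \<Rightarrow> sym_fun" where
  "H_G G n f = (\<Sum>\<beta>\<in>Poly_Mapping.keys f.
       of_int (Poly_Mapping.lookup f \<beta>) * (\<Prod>i\<in>{1..n}. hG G (Poly_Mapping.lookup \<beta> i)))"

definition det_m :: "nat \<Rightarrow> (nat \<Rightarrow> nat \<Rightarrow> 'a::comm_ring_1) \<Rightarrow> 'a" where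
  "det_m m M = (\<Sum>\<sigma> | \<sigma> permutes {1..m}. of_int (sign \<sigma>) * (\<Prod>i\<in>{1..m}. M i (\<sigma> i)))"

definition u_G :: "group_type \<Rightarrow> nat \<Rightarrow> (nat \<Rightarrow> int) \<Rightarrow> sym_fun" where
  "u_G G m \<alpha> = det_m m (\<lambda>i j.
      if j = 1 then hG G (\<alpha> i - int i + 1)
      else hG G (\<alpha> i - int i + int j) + hG G (\<alpha> i - int i - int j + 2))"

(* delta_K for K = [k_1..k_m] with k_i = k0 + i *)
definition delta_K :: "nat \<Rightarrow> nat \<Rightarrow> laurent" where
  "delta_K k0 m =
     (\<Prod>(i,j)\<in>{(i,j). 1 \<le> i \<and> i < j \<and> j \<le> m}. 1 - xpow (k0+i) 1 * xpow (k0+j) (-1)) *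
     (\<Prod>(r,s)\<in>{(r,s). 1 \<le> r \<and> r < s \<and> s \<le> m}. 1 - xpow (k0+r) (-1) * xpow (k0+s) (-1))"

end

theory Submission
  imports Defs "Jordan_Normal_Form.Determinant"
begin

definition phi :: "group_type \<Rightarrow> nat \<Rightarrow> (nat \<Rightarrow>\<^sub>0 int) \<Rightarrow> sym_fun" where
  "phi G n \<beta> = (\<Prod>i\<in>{1..n}. hG G (Poly_Mapping.lookup \<beta> i))"

lemma H_eq_sum:
  assumes "finite S" "Poly_Mapping.keys f \<subseteq> S"
  shows "H_G G n f = (\<Sum>\<beta>\<in>S. of_int (Poly_Mapping.lookup f \<beta>) * phi G n \<beta>)"
  unfolding H_G_def phi_def
  by (rule sum.mono_neutral_left) (use assms in \<open>auto simp: in_keys_iff\<close>)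

lemma H_single: "H_G G n (Poly_Mapping.single \<beta> c) = of_int c * phi G n \<beta>"
  by (subst H_eq_sum[of "{\<beta>}"]) auto

lemma H_zero[simp]: "H_G G n 0 = 0"
  by (simp add: H_G_def)

lemma H_add: "H_G G n (f + g) = H_G G n f + H_G G n g"
proof -
  let ?S = "Poly_Mapping.keys f \<union> Poly_Mapping.keys g"
  have "H_G G n (f + g) = (\<Sum>\<beta>\<in>?S. of_int (Poly_Mapping.lookup (f+g) \<beta>) * phi G n \<beta>)"
    using keys_add[of f g] by (intro H_eq_sum) auto
  also have "\<dots> = (\<Sum>\<beta>\<in>?S. of_int (Poly_Mapping.lookup f \<beta>) * phi G n \<beta>)
     + (\<Sum>\<beta>\<in>?S. of_int (Poly_Mapping.lookup g \<beta>) * phi G n \<beta>)"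
    by (simp add: lookup_add sum.distrib algebra_simps)
  also have "\<dots> = H_G G n f + H_G G n g"
    by (subst (1 2) H_eq_sum[of ?S]) auto
  finally show ?thesis .
qed

lemma H_uminus: "H_G G n (- f) = - H_G G n f"
  unfolding H_G_def by (simp add: sum_negf)

lemma H_diff: "H_G G n (f - g) = H_G G n f - H_G G n g"
  using H_add[of G n f "- g"] H_uminus[of G n g] by simp

lemma H_sum: "H_G G n (\<Sum>i\<in>I. f i) = (\<Sum>i\<in>I. H_G G n (f i))"
  by (induction I rule: infinite_finite_induct) (auto simp: H_add)

lemma H_of_int_mult: "H_G G n (of_int c * f) = of_int c * H_G G n f"
proof -
  have "Poly_Mapping.keys f \<subseteq> UNIV" by simp
  then show ?thesis
  proof (induction f rule: frag_induction)
    case zero then show ?case by simp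
  next
    case (one x)
    have "(of_int c :: laurent) * Poly_Mapping.single x 1 = Poly_Mapping.single x c"
      by (simp add: mult_single flip: single_of_int)
    then show ?case by (simp add: H_single)
  next
    case (diff a b) then show ?case by (simp add: right_diff_distrib H_diff)
  qed
qed

lemma hG0[simp]: "hG G 0 = 1"
  by (cases G) (auto simp: hG_def hsym_def)

definition free :: "nat \<Rightarrow> laurent \<Rightarrow> bool" where
  "free w f \<longleftrightarrow> (\<forall>\<beta>\<in>Poly_Mapping.keys f. Poly_Mapping.lookup \<beta> w = 0)"

definition univ :: "nat \<Rightarrow> laurent \<Rightarrow> bool" where
  "univ w f \<longleftrightarrow> Poly_Mapping.keys f \<subseteq> range (Poly_Mapping.single w)"

lemma phi_shift:
  assumes "Poly_Mapping.lookup \<beta> w = 0" "w \<in> {1..n}"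
  shows "phi G n (Poly_Mapping.single w e + \<beta>) = hG G e * phi G n \<beta>"
proof -
  have "phi G n (Poly_Mapping.single w e + \<beta>) =
     hG G e * (\<Prod>i\<in>{1..n}-{w}. hG G (Poly_Mapping.lookup (Poly_Mapping.single w e + \<beta>) i))"
    unfolding phi_def using assms by (subst prod.remove[of _ w]) (auto simp: lookup_add)
  also have "(\<Prod>i\<in>{1..n}-{w}. hG G (Poly_Mapping.lookup (Poly_Mapping.single w e + \<beta>) i))
      = (\<Prod>i\<in>{1..n}-{w}. hG G (Poly_Mapping.lookup \<beta> i))"
    by (rule prod.cong) (auto simp: lookup_add lookup_single)
  also have "\<dots> = phi G n \<beta>"
    unfolding phi_def using assms by (subst (2) prod.remove[of _ w]) auto
  finally show ?thesis .
qed

lemma H_mult_xpow: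
  assumes "w \<in> {1..n}" "free w F"
  shows "H_G G n (xpow w e * F) = hG G e * H_G G n F"
proof -
  have "Poly_Mapping.keys F \<subseteq> {\<beta>. Poly_Mapping.lookup \<beta> w = 0}"
    using assms(2) by (auto simp: free_def)
  then show ?thesis
  proof (induction F rule: frag_induction)
    case zero then show ?case by simp
  next
    case (one x)
    then show ?case using assms(1)
      by (simp add: xpow_def mult_single H_single phi_shift)
  next
    case (diff a b) then show ?case by (simp add: right_diff_distrib H_diff)
  qed
qed

lemma free_one: "free w 1"
  by (simp add: free_def)

lemma H_one: "H_G G n 1 = 1"
  by (simp add: H_G_def)

lemma H_xpow: "w \<in> {1..n} \<Longrightarrow> H_G G n (xpow w e) = hG G e"
  using H_mult_xpow[OF _ free_one, of w n G e] by (simp add: H_one)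

lemma H_mult:
  assumes "w \<in> {1..n}" "free w F" "univ w f"
  shows "H_G G n (f * F) = H_G G n f * H_G G n F"
proof -
  have "Poly_Mapping.keys f \<subseteq> range (Poly_Mapping.single w)"
    using assms(3) by (simp add: univ_def)
  then show ?thesis
  proof (induction f rule: frag_induction)
    case zero then show ?case by simp
  next
    case (one x)
    then obtain e where "x = Poly_Mapping.single w e" by auto
    then show ?case using assms
      by (simp add: H_mult_xpow H_xpow flip: xpow_def)
  next
    case (diff a b) then show ?case by (simp add: left_diff_distrib H_diff)
  qed
qed

lemma free_mult: "free w f \<Longrightarrow> free w g \<Longrightarrow> free w (f * g)"
  unfolding free_def using keys_mult[of f g] by (force simp: lookup_add)

lemma free_prod: "(\<And>j. j \<in> J \<Longrightarrow> free w (g j)) \<Longrightarrow> free w (\<Prod>j\<in>J. g j)"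
  by (induction J rule: infinite_finite_induct) (auto simp: free_one free_mult)

lemma univ_free: "univ u f \<Longrightarrow> u \<noteq> w \<Longrightarrow> free w f"
  unfolding univ_def free_def by (auto simp: lookup_single)

lemma H_prod:
  assumes "finite I" "inj_on v I" "v ` I \<subseteq> {1..n}" "\<And>i. i \<in> I \<Longrightarrow> univ (v i) (g i)"
  shows "H_G G n (\<Prod>i\<in>I. g i) = (\<Prod>i\<in>I. H_G G n (g i))"
  using assms
proof (induction I rule: finite_induct)
  case empty then show ?case by (simp add: H_one)
next
  case (insert i I)
  have fr: "free (v i) (\<Prod>j\<in>I. g j)"
  proof (rule free_prod)
    fix j assume j: "j \<in> I"
    then have "v j \<noteq> v i" using insert(2,4) by (auto simp: image_iff)
    then show "free (v i) (g j)" using univ_free insert.prems(3) j by blast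
  qed
  have "H_G G n (\<Prod>j\<in>insert i I. g j) = H_G G n (g i * (\<Prod>j\<in>I. g j))"
    using insert by simp
  also have "\<dots> = H_G G n (g i) * H_G G n (\<Prod>j\<in>I. g j)"
    by (rule H_mult) (use insert fr in auto)
  finally show ?case using insert by simp
qed

lemma univ_xpow: "univ w (xpow w e)"
  by (simp add: univ_def xpow_def)

lemma univ_add: "univ w f \<Longrightarrow> univ w g \<Longrightarrow> univ w (f + g)"
  unfolding univ_def using keys_add[of f g] by blast

lemma univ_one: "univ w 1"
  unfolding univ_def by (auto intro: range_eqI[of _ _ 0])

lemma univ_mult: "univ w f \<Longrightarrow> univ w g \<Longrightarrow> univ w (f * g)"
  unfolding univ_def using keys_mult[of f g] by (force simp flip: single_add)


lemma permutes_less: "(p::nat\<Rightarrow>nat) permutes {0..<n} \<Longrightarrow> i < n \<Longrightarrow> p i < n"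
  using permutes_in_image[of p "{0..<n}" i] by auto

lemma det_scale_rows:
  "det (mat n n (\<lambda>(i,j). c i * B i j)) = (\<Prod>i<n. c i) * det (mat n n (\<lambda>(i,j). B i j))"
proof -
  have "det (mat n n (\<lambda>(i,j). c i * B i j)) =
     (\<Sum>p\<in>{p. p permutes {0..<n}}. signof p * (\<Prod>i=0..<n. c i * B i (p i)))"
    by (subst det_def'[of _ n]) (auto intro!: sum.cong prod.cong permutes_less simp: atLeast0LessThan)
  also have "\<dots> = (\<Sum>p\<in>{p. p permutes {0..<n}}. (\<Prod>i<n. c i) * (signof p * (\<Prod>i=0..<n. B i (p i))))"
    by (rule sum.cong) (auto simp: prod.distrib atLeast0LessThan)
  also have "\<dots> = (\<Prod>i<n. c i) * det (mat n n (\<lambda>(i,j). B i j))"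
    by (subst det_def'[of _ n]) (auto intro!: sum.cong prod.cong permutes_less simp: sum_distrib_left atLeast0LessThan)
  finally show ?thesis .
qed


lemma sum_E:
  fixes z c :: "'a::comm_ring_1"
  assumes "j < Suc n"
  shows "(\<Sum>k\<in>{0..<Suc n}. z ^ k * (if k = j then 1 else if Suc k = j then c else 0)) =
         (if j = 0 then 1 else z ^ j + c * z ^ (j - 1))"
proof (cases j)
  case 0
  then show ?thesis using assms
    by (simp add: if_distrib[of "\<lambda>x. _ * x"] cong: if_cong)
next
  case (Suc j')
  have "(\<Sum>k\<in>{0..<Suc n}. z ^ k * (if k = j then 1 else if Suc k = j then c else 0)) =
        (\<Sum>k\<in>{0..<Suc n}. (if k = j then z ^ k else 0) + (if k = j' then c * z ^ k else 0))"
    by (rule sum.cong) (auto simp: Suc)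
  also have "\<dots> = z ^ j + c * z ^ j'"
    using assms Suc by (simp add: sum.distrib)
  finally show ?thesis using Suc by simp
qed

lemma vandermonde:
  fixes z :: "nat \<Rightarrow> 'a::comm_ring_1"
  shows "det (mat n n (\<lambda>(i,j). z i ^ j)) = (\<Prod>j<n. \<Prod>i<j. z j - z i)"
proof (induction n arbitrary: z)
  case 0
  then show ?case by simp
next
  case (Suc n)
  define V where "V = mat (Suc n) (Suc n) (\<lambda>(i,j). z i ^ j)"
  define E where "E = mat (Suc n) (Suc n) (\<lambda>(i,j). if i = j then 1 else if Suc i = j then - z 0 else (0::'a))"
  have V: "V \<in> carrier_mat (Suc n) (Suc n)" and E: "E \<in> carrier_mat (Suc n) (Suc n)"
    by (auto simp: V_def E_def)
  have VE: "V * E = mat (Suc n) (Suc n) (\<lambda>(i,j). if j = 0 then 1 else z i ^ j - z 0 * z i ^ (j - 1))"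
  proof (rule eq_matI)
    fix i j assume ij: "i < dim_row (mat (Suc n) (Suc n) (\<lambda>(i,j). if j = 0 then 1 else z i ^ j - z 0 * z i ^ (j - 1)))"
       "j < dim_col (mat (Suc n) (Suc n) (\<lambda>(i,j). if j = 0 then (1::'a) else z i ^ j - z 0 * z i ^ (j - 1)))"
    then have "(V * E) $$ (i, j) = (\<Sum>k\<in>{0..<Suc n}. z i ^ k * (if k = j then 1 else if Suc k = j then - z 0 else 0))"
      by (simp add: V_def E_def scalar_prod_def)
    also have "\<dots> = (if j = 0 then 1 else z i ^ j - z 0 * z i ^ (j - 1))"
      using ij by (subst sum_E) auto
    finally show "(V * E) $$ (i, j) = mat (Suc n) (Suc n) (\<lambda>(i,j). if j = 0 then 1 else z i ^ j - z 0 * z i ^ (j - 1)) $$ (i, j)"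
      using ij by simp
  qed (auto simp: V_def E_def)
  have ut: "upper_triangular E" unfolding upper_triangular_def by (auto simp: E_def)
  have detE: "det E = 1"
  proof -
    have m: "map (\<lambda>i. E $$ (i,i)) [0..<Suc n] = map (\<lambda>i. 1) [0..<Suc n]"
      by (rule map_cong) (auto simp: E_def)
    have dimE: "dim_row E = Suc n" using E by auto
    show ?thesis
      apply (subst det_upper_triangular[OF ut E])
      apply (simp only: diag_mat_def dimE m)
      by (simp add: map_replicate_const del: upt_Suc)
  qed
  have "det V = det (V * E)" using det_mult[OF V E] detE by simp
  also have "\<dots> = (\<Sum>j<Suc n. (V * E) $$ (0, j) * cofactor (V * E) 0 j)"
    by (rule laplace_expansion_row) (use V E in auto)
  also have "\<dots> = cofactor (V * E) 0 0"
    by (subst sum.lessThan_Suc_shift) (simp add: VE)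
  also have "\<dots> = det (mat n n (\<lambda>(i,j). (z (Suc i) - z 0) * z (Suc i) ^ j))"
  proof -
    have "mat_delete (V * E) 0 0 = mat n n (\<lambda>(i,j). (z (Suc i) - z 0) * z (Suc i) ^ j)"
      by (rule eq_matI) (auto simp: VE mat_delete_def insert_index_def algebra_simps)
    then show ?thesis by (simp add: cofactor_def)
  qed
  also have "\<dots> = (\<Prod>i<n. z (Suc i) - z 0) * (\<Prod>j<n. \<Prod>i<j. z (Suc j) - z (Suc i))"
    using det_scale_rows[of n "\<lambda>i. z (Suc i) - z 0" "\<lambda>i j. z (Suc i) ^ j"] Suc.IH[of "\<lambda>i. z (Suc i)"]
    by simp
  also have "\<dots> = (\<Prod>j<n. \<Prod>i<Suc j. z (Suc j) - z i)"
    by (simp only: prod.lessThan_Suc_shift[of "\<lambda>i. z (Suc _) - z i"] prod.distrib)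
  also have "\<dots> = (\<Prod>j<Suc n. \<Prod>i<j. z j - z i)"
    by (subst (2) prod.lessThan_Suc_shift) simp
  finally show ?case by (simp add: V_def)
qed


lemma det_monic:
  fixes z :: "nat \<Rightarrow> 'a::comm_ring_1" and p :: "nat \<Rightarrow> 'a poly"
  assumes p1: "\<And>j. coeff (p j) j = 1" and p0: "\<And>j k. j < k \<Longrightarrow> coeff (p j) k = 0"
  shows "det (mat n n (\<lambda>(i,j). poly (p j) (z i))) = det (mat n n (\<lambda>(i,j). z i ^ j))"
proof -
  define V where "V = mat n n (\<lambda>(i,j). z i ^ j)"
  define U where "U = mat n n (\<lambda>(k,j). coeff (p j) k)"
  have V: "V \<in> carrier_mat n n" and U: "U \<in> carrier_mat n n"
    by (auto simp: V_def U_def)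
  have VU: "V * U = mat n n (\<lambda>(i,j). poly (p j) (z i))"
  proof (rule eq_matI)
    fix i j assume ij: "i < dim_row (mat n n (\<lambda>(i,j). poly (p j) (z i)))"
       "j < dim_col (mat n n (\<lambda>(i,j). poly (p j) (z i)))"
    then have "(V * U) $$ (i, j) = (\<Sum>k\<in>{0..<n}. z i ^ k * coeff (p j) k)"
      by (simp add: V_def U_def scalar_prod_def)
    also have "\<dots> = (\<Sum>k\<le>degree (p j). coeff (p j) k * z i ^ k)"
    proof (rule sum.mono_neutral_cong_right)
      have "degree (p j) \<le> j" by (rule degree_le) (use p0 in auto)
      then show "{..degree (p j)} \<subseteq> {0..<n}" using ij by auto
    qed (auto simp: p0 coeff_eq_0)
    also have "\<dots> = poly (p j) (z i)" by (simp add: poly_altdef)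
    finally show "(V * U) $$ (i, j) = mat n n (\<lambda>(i,j). poly (p j) (z i)) $$ (i, j)"
      using ij by simp
  qed (auto simp: V_def U_def)
  have ut: "upper_triangular U" unfolding upper_triangular_def by (auto simp: U_def p0)
  have detU: "det U = 1"
  proof -
    have m: "map (\<lambda>i. U $$ (i,i)) [0..<n] = map (\<lambda>i. 1) [0..<n]"
      by (rule map_cong) (auto simp: U_def p1)
    have dimU: "dim_row U = n" using U by auto
    show ?thesis
      apply (subst det_upper_triangular[OF ut U])
      apply (simp only: diag_mat_def dimU m)
      by (simp add: map_replicate_const)
  qed
  show ?thesis using det_mult[OF V U] detU VU by (simp add: V_def)
qed

lemma bij_Suc: "bij_betw Suc {0..<m} {1..m}"
  by (rule bij_betw_byWitness[of _ "\<lambda>x. x - 1"]) auto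

lemma bij_pred: "bij_betw (\<lambda>x. x - 1) {1..m} {0..<(m::nat)}"
proof (rule bij_betw_imageI)
  show "inj_on (\<lambda>x. x - 1) {1..m}" by (auto simp: inj_on_def)
  show "(\<lambda>x. x - 1) ` {1..m} = {0..<m}"
  proof safe
    fix x assume "x \<in> {0..<m}"
    then show "x \<in> (\<lambda>x. x - 1) ` {1..m}" by (intro image_eqI[of _ _ "Suc x"]) auto
  qed auto
qed

lemma det_m_bridge:
  "det_m m M = det (mat m m (\<lambda>(i,j). M (Suc i) (Suc j)))"
proof -
  have "det (mat m m (\<lambda>(i,j). M (Suc i) (Suc j))) =
     (\<Sum>p\<in>{p. p permutes {0..<m}}. of_int (sign p) * (\<Prod>i=0..<m. M (Suc i) (Suc (p i))))"
    by (subst det_def'[of _ m]) (auto intro!: sum.cong prod.cong permutes_less)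
  also have "\<dots> = det_m m M"
    unfolding det_m_def
  proof (rule sum.reindex_bij_witness[of _ "map_permutation {1..m} (\<lambda>x. x - 1)" "map_permutation {0..<m} Suc"])
    fix p assume p: "p \<in> {p. p permutes {0..<m}}"
    show "map_permutation {1..m} (\<lambda>x. x - 1) (map_permutation {0..<m} Suc p) = p"
      by (rule map_permutation_compose_inv) (use p bij_Suc in auto)
    show "map_permutation {0..<m} Suc p \<in> {\<sigma>. \<sigma> permutes {1..m}}"
      using map_permutation_permutes[OF bij_Suc] p by auto
    have sg: "sign (map_permutation {0..<m} Suc p) = sign p"
      by (rule sign_map_permutation) (use p in auto)
    have "(\<Prod>i\<in>{1..m}. M i (map_permutation {0..<m} Suc p i)) =
          (\<Prod>i\<in>{0..<m}. M (Suc i) (map_permutation {0..<m} Suc p (Suc i)))"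
      using prod.reindex_bij_betw[OF bij_Suc, of "\<lambda>i. M i (map_permutation {0..<m} Suc p i)"] by simp
    also have "\<dots> = (\<Prod>i=0..<m. M (Suc i) (Suc (p i)))"
      by (rule prod.cong) (auto simp: map_permutation_apply)
    finally show "of_int (sign (map_permutation {0..<m} Suc p)) * (\<Prod>i\<in>{1..m}. M i (map_permutation {0..<m} Suc p i))
       = of_int (sign p) * (\<Prod>i = 0..<m. M (Suc i) (Suc (p i)))" using sg by simp
  next
    fix \<sigma> assume s: "\<sigma> \<in> {\<sigma>. \<sigma> permutes {1..m}}"
    show "map_permutation {0..<m} Suc (map_permutation {1..m} (\<lambda>x. x - 1) \<sigma>) = \<sigma>"
      by (rule map_permutation_compose_inv[OF bij_pred]) (use s in auto)
    show "map_permutation {1..m} (\<lambda>x. x - 1) \<sigma> \<in> {p. p permutes {0..<m}}"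
      unfolding mem_Collect_eq by (rule map_permutation_permutes[OF bij_pred]) (use s in simp)
  qed
  finally show ?thesis ..
qed


fun pp :: "nat \<Rightarrow> 'a::comm_ring_1 poly" where
  "pp 0 = 1"
| "pp (Suc 0) = [:0,1:]"
| "pp (Suc (Suc 0)) = [:-2,0,1:]"
| "pp (Suc (Suc (Suc k))) = pCons 0 (pp (Suc (Suc k))) - pp (Suc k)"

lemma coeff_pp: "coeff (pp j :: 'a::comm_ring_1 poly) j = 1 \<and> (\<forall>k>j. coeff (pp j :: 'a poly) k = 0)"
proof (induction j rule: pp.induct)
  case 1 then show ?case by (auto simp: coeff_1)
next
  case 2 then show ?case by (auto simp: coeff_pCons split: nat.split)
next
  case 3 then show ?case by (auto simp: coeff_pCons split: nat.split)
next
  case (4 k) then show ?case by (auto simp: coeff_pCons coeff_diff split: nat.split)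
qed

lemma xpow_mult: "xpow v a * xpow v b = xpow v (a + b)"
  by (simp add: xpow_def mult_single single_add)

lemma xpow_zero[simp]: "xpow v 0 = 1"
  by (simp add: xpow_def)

lemma xpow_pow: "xpow v a ^ k = xpow v (int k * a)"
  by (induction k) (auto simp: xpow_mult algebra_simps)

definition R :: "nat \<Rightarrow> nat \<Rightarrow> laurent" where
  "R j v = (if j = 0 then 1 else xpow v (int j) + xpow v (- int j))"

definition Z :: "nat \<Rightarrow> laurent" where
  "Z v = xpow v 1 + xpow v (-1)"

lemma poly_pp: "poly (pp j) (Z v) = R j v"
proof (induction j rule: pp.induct)
  case 1 then show ?case by (simp add: R_def)
next
  case 2 then show ?case by (simp add: R_def Z_def)
next
  case 3
  have "Z v * Z v = xpow v 2 + xpow v (-2) + 2"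
    by (simp add: Z_def algebra_simps xpow_mult)
  then show ?case by (simp add: R_def algebra_simps)
next
  case (4 k)
  have "Z v * R (Suc (Suc k)) v = R (Suc (Suc (Suc k))) v + R (Suc k) v"
    by (simp add: Z_def R_def algebra_simps xpow_mult)
  then show ?case using 4 by (simp add: algebra_simps)
qed

lemma factor_id:
  fixes a a' b b' :: "'a::comm_ring_1"
  assumes "a * a' = 1" "b * b' = 1"
  shows "(1 - a * b') * (1 - a' * b') = b' * ((b + b') - (a + a'))"
proof -
  have "(1 - a * b') * (1 - a' * b') = 1 - a * b' - a' * b' + (a * a') * (b' * b')"
    by (simp add: algebra_simps)
  also have "\<dots> = b * b' - a * b' - a' * b' + b' * b'" using assms by simp
  finally show ?thesis by (simp add: algebra_simps)
qed

lemma prod_pairs: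
  "(\<Prod>(i,j)\<in>{(i,j). 1 \<le> i \<and> i < j \<and> j \<le> (m::nat)}. f i j) = (\<Prod>j\<in>{1..m}. \<Prod>i\<in>{1..<j}. f i j)"
proof -
  have e: "{(i,j). 1 \<le> i \<and> i < j \<and> j \<le> m} = (\<lambda>(j,i). (i,j)) ` (SIGMA j:{1..m}. {1..<j})"
    by (auto simp: image_iff)
  have inj: "inj_on (\<lambda>(j,i). (i::nat,j::nat)) (SIGMA j:{1..m}. {1..<j})"
    by (auto simp: inj_on_def)
  show ?thesis
    unfolding e by (subst prod.reindex[OF inj]) (simp add: prod.Sigma case_prod_unfold)
qed


lemma prod_shift2: "(\<Prod>i\<in>{1..j}. f i) = (\<Prod>i<j. f (Suc i))"
  using prod.atLeast1_atMost_eq[of f j] by simp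

lemma prod_shift1: "(\<Prod>i\<in>{1..<Suc j}. f i) = (\<Prod>i<j. f (Suc i))"
  using prod_shift2[where j=j and f=f] by (simp add: atLeastLessThanSuc_atLeastAtMost)

lemma delta_eq:
  "delta_K k0 m = (\<Prod>j\<in>{1..m}. xpow (k0+j) (1 - int j)) * det_m m (\<lambda>i j. R (j - 1) (k0 + i))"
proof -
  let ?P = "{(i,j). 1 \<le> i \<and> i < j \<and> j \<le> m}"
  have f: "(1 - xpow (k0+i) 1 * xpow (k0+j) (-1)) * (1 - xpow (k0+i) (-1) * xpow (k0+j) (-1))
        = xpow (k0+j) (-1) * (Z (k0+j) - Z (k0+i))" for i j
    unfolding Z_def by (rule factor_id) (simp_all add: xpow_mult)
  have "delta_K k0 m = (\<Prod>(i,j)\<in>?P. xpow (k0+j) (-1) * (Z (k0+j) - Z (k0+i)))"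
    unfolding delta_K_def prod.distrib[symmetric] by (rule prod.cong) (auto simp: f)
  also have "\<dots> = (\<Prod>(i,j)\<in>?P. xpow (k0+j) (-1)) * (\<Prod>(i,j)\<in>?P. Z (k0+j) - Z (k0+i))"
    by (simp add: prod.distrib[symmetric] case_prod_unfold)
  also have "(\<Prod>(i,j)\<in>?P. xpow (k0+j) (-1)) = (\<Prod>j\<in>{1..m}. xpow (k0+j) (1 - int j))"
  proof -
    have "(\<Prod>(i,j)\<in>?P. xpow (k0+j) (-1)) = (\<Prod>j\<in>{1..m}. \<Prod>i\<in>{1..<j}. xpow (k0+j) (-1))"
      by (rule prod_pairs)
    also have "\<dots> = (\<Prod>j\<in>{1..m}. xpow (k0+j) (1 - int j))"
      by (rule prod.cong) (auto simp: xpow_pow of_nat_diff)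
    finally show ?thesis .
  qed
  also have "(\<Prod>(i,j)\<in>?P. Z (k0+j) - Z (k0+i)) = det_m m (\<lambda>i j. R (j - 1) (k0 + i))"
  proof -
    define w where "w i = Z (k0 + Suc i)" for i
    have "(\<Prod>(i,j)\<in>?P. Z (k0+j) - Z (k0+i)) = (\<Prod>j\<in>{1..m}. \<Prod>i\<in>{1..<j}. Z (k0+j) - Z (k0+i))"
      by (rule prod_pairs)
    also have "\<dots> = (\<Prod>j<m. \<Prod>i<j. w j - w i)"
      by (simp only: prod_shift1 prod_shift2 w_def add_Suc_right)
    also have "\<dots> = det (mat m m (\<lambda>(i,j). w i ^ j))"
      by (rule vandermonde[symmetric])
    also have "\<dots> = det (mat m m (\<lambda>(i,j). poly (pp j) (w i)))"
      by (rule det_monic[symmetric]) (use coeff_pp in auto)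
    also have "\<dots> = det (mat m m (\<lambda>(i,j). R j (k0 + Suc i)))"
      by (simp add: w_def poly_pp)
    also have "\<dots> = det_m m (\<lambda>i j. R (j - 1) (k0 + i))"
      by (simp add: det_m_bridge)
    finally show ?thesis .
  qed
  finally show ?thesis .
qed


lemma H_g:
  assumes "v \<in> {1..n}"
  shows "H_G G n (xpow v a * R j v) = (if j = 0 then hG G a else hG G (a + int j) + hG G (a - int j))"
  using assms by (simp add: R_def H_xpow ring_distribs xpow_mult H_add)

lemma univ_g: "univ v (xpow v a * R j v)"
  by (simp add: R_def univ_mult univ_xpow univ_one univ_add)

theorem mainTheorem8:
  fixes G :: group_type and n m k0 :: nat and \<alpha> :: "nat \<Rightarrow> int"
  assumes "k0 + m \<le> n"
  shows "H_G G n (delta_K k0 m * (\<Prod>i\<in>{1..m}. xpow (k0+i) (\<alpha> i))) = u_G G m \<alpha>"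
proof -
  let ?S = "{\<sigma>. \<sigma> permutes {1..m}}"
  define g where "g \<sigma> i = xpow (k0+i) (\<alpha> i + 1 - int i) * R (\<sigma> i - 1) (k0+i)" for \<sigma> :: "nat \<Rightarrow> nat" and i
  define M where "M i j = (if j = 1 then hG G (\<alpha> i - int i + 1)
      else hG G (\<alpha> i - int i + int j) + hG G (\<alpha> i - int i - int j + 2))" for i j
  have W: "(\<Prod>j\<in>{1..m}. xpow (k0+j) (1 - int j)) * (\<Prod>i\<in>{1..m}. xpow (k0+i) (\<alpha> i))
      = (\<Prod>i\<in>{1..m}. xpow (k0+i) (\<alpha> i + 1 - int i))"
    by (subst prod.distrib[symmetric]) (rule prod.cong, auto simp: xpow_mult algebra_simps)
  have "delta_K k0 m * (\<Prod>i\<in>{1..m}. xpow (k0+i) (\<alpha> i))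
      = (\<Prod>i\<in>{1..m}. xpow (k0+i) (\<alpha> i + 1 - int i)) * det_m m (\<lambda>i j. R (j - 1) (k0 + i))"
    unfolding delta_eq W[symmetric] by (simp add: algebra_simps)
  also have "\<dots> = (\<Sum>\<sigma>\<in>?S. of_int (sign \<sigma>) * (\<Prod>i\<in>{1..m}. g \<sigma> i))"
    unfolding det_m_def sum_distrib_left
    by (rule sum.cong) (auto simp: g_def prod.distrib algebra_simps)
  finally have "H_G G n (delta_K k0 m * (\<Prod>i\<in>{1..m}. xpow (k0+i) (\<alpha> i)))
      = (\<Sum>\<sigma>\<in>?S. of_int (sign \<sigma>) * H_G G n (\<Prod>i\<in>{1..m}. g \<sigma> i))"
    by (simp add: H_sum H_of_int_mult)
  also have "\<dots> = (\<Sum>\<sigma>\<in>?S. of_int (sign \<sigma>) * (\<Prod>i\<in>{1..m}. M i (\<sigma> i)))"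
  proof (rule sum.cong[OF refl])
    fix \<sigma> assume s: "\<sigma> \<in> ?S"
    have "H_G G n (\<Prod>i\<in>{1..m}. g \<sigma> i) = (\<Prod>i\<in>{1..m}. H_G G n (g \<sigma> i))"
      by (rule H_prod[where v="\<lambda>i. k0 + i"]) (use assms in \<open>auto simp: g_def univ_g inj_on_def\<close>)
    also have "\<dots> = (\<Prod>i\<in>{1..m}. M i (\<sigma> i))"
    proof (rule prod.cong[OF refl])
      fix i assume i: "i \<in> {1..m}"
      then have si: "\<sigma> i \<in> {1..m}" using s permutes_in_image[of \<sigma> "{1..m}" i] by auto
      have "H_G G n (g \<sigma> i) = (if \<sigma> i - 1 = 0 then hG G (\<alpha> i + 1 - int i)
           else hG G (\<alpha> i + 1 - int i + int (\<sigma> i - 1)) + hG G (\<alpha> i + 1 - int i - int (\<sigma> i - 1)))"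
        unfolding g_def by (rule H_g) (use i assms in auto)
      also have "\<dots> = M i (\<sigma> i)"
        using si by (auto simp: M_def of_nat_diff algebra_simps)
      finally show "H_G G n (g \<sigma> i) = M i (\<sigma> i)" .
    qed
    finally show "of_int (sign \<sigma>) * H_G G n (\<Prod>i\<in>{1..m}. g \<sigma> i) = of_int (sign \<sigma>) * (\<Prod>i\<in>{1..m}. M i (\<sigma> i))"
      by simp
  qed
  also have "\<dots> = u_G G m \<alpha>"
    unfolding u_G_def det_m_def M_def by simp
  finally show ?thesis .
qed

end
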